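(* Suppose $\|\tau_l-\tau_i\|_\infty\ge B$ for all $l\neq i$, and $\mathbb{E}[S^z(0)]>0$. For $l\in\{1,\dots,N\}$ let $\mathrm{SNR}_y(\tau_l)=\|a_l\|^2/(\sigma^2B^d)$ where $\sigma^2=\mathbb{E}[z(t)^2]$, and $\mathrm{SNR}_{S^y}(\tau_l)=S^x(\tau_l)/\mathbb{E}[S^z(\tau_l)]$. Then $\mathrm{SNR}_{S^y}(\tau_l)=\gamma\cdot\mathrm{SNR}_y(\tau_l)$ for some $\gamma\ge1$ (not depending on $l$).
   Context: $C(t_0,\ell)=\{t\in\mathbb{R}^d:\|t-t_0\|_\infty<\ell/2\}$. Functions $\psi_1,\dots,\psi_M\in C^\infty(\mathbb{R}^d)$ are supported in $C(0,B)$ and orthonormal in $L^2(C(0,B))$. $x(t)=\sum_{i=1}^N\sum_{j=1}^M a_{ij}\psi_j(t-\tau_i)$, $a_i=(a_{i1},\dots,a_{iM})$. $z$ is a centered Gaussian stationary process on $\mathbb{R}^d$ with continuous sample paths. $\tilde\psi_j(t)=\psi_j(-t)$, $(f*\tilde\psi_j)(t)=\int_{\mathbb{R}^d} f(s)\psi_j(s-t)\,ds$, $S^f=\sum_{j=1}^M(f*\tilde\psi_j)^2$ for $f\in\{x,z\}$. *)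

theory Defs
  imports "HOL-Probability.Probability"
begin

definition cube :: "real^'d \<Rightarrow> real \<Rightarrow> (real^'d) set" where
  "cube t0 l = {t. infnorm (t - t0) < l / 2}"

text \<open>C-infinity: f lies in a family of everywhere (Frechet) differentiable functions
  closed under taking partial derivatives; i.e. all iterated partials exist and are differentiable.\<close>
definition smooth_fun :: "(real^'d \<Rightarrow> real) \<Rightarrow> bool" where
  "smooth_fun f \<longleftrightarrow> (\<exists>S. f \<in> S \<and> (\<forall>g\<in>S. (\<forall>x. g differentiable (at x)) \<and>
       (\<forall>i. (\<lambda>x. frechet_derivative g (at x) (axis i 1)) \<in> S)))"

definition corr :: "(real^'d \<Rightarrow> real) \<Rightarrow> (real^'d \<Rightarrow> real) \<Rightarrow> real^'d \<Rightarrow> real" where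
  "corr f \<psi> t = (LINT s|lborel. f s * \<psi> (s - t))"

definition Sfun :: "(nat \<Rightarrow> real^'d \<Rightarrow> real) \<Rightarrow> nat \<Rightarrow> (real^'d \<Rightarrow> real) \<Rightarrow> real^'d \<Rightarrow> real" where
  "Sfun \<psi> m f t = (\<Sum>j=1..m. (corr f (\<psi> j) t)\<^sup>2)"

definition centered_gaussian_rv :: "'w measure \<Rightarrow> ('w \<Rightarrow> real) \<Rightarrow> bool" where
  "centered_gaussian_rv M X \<longleftrightarrow> X \<in> borel_measurable M \<and>
     ((\<exists>\<sigma>>0. distributed M lborel X (\<lambda>x. ennreal (normal_density 0 \<sigma> x)))
      \<or> (AE \<omega> in M. X \<omega> = 0))"

definition centered_gaussian_process :: "'w measure \<Rightarrow> ('t \<Rightarrow> 'w \<Rightarrow> real) \<Rightarrow> bool" where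
  "centered_gaussian_process M z \<longleftrightarrow>
     (\<forall>(n::nat) (ts::nat \<Rightarrow> 't) (c::nat \<Rightarrow> real).
        centered_gaussian_rv M (\<lambda>\<omega>. \<Sum>i<n. c i * z (ts i) \<omega>))"

definition stationary_process :: "'w measure \<Rightarrow> ('t::plus \<Rightarrow> 'w \<Rightarrow> real) \<Rightarrow> bool" where
  "stationary_process M z \<longleftrightarrow>
     (\<forall>(n::nat) (ts::nat \<Rightarrow> 't) h.
        distr M (PiM {..<n} (\<lambda>_. borel)) (\<lambda>\<omega>. \<lambda>i\<in>{..<n}. z (ts i + h) \<omega>)
      = distr M (PiM {..<n} (\<lambda>_. borel)) (\<lambda>\<omega>. \<lambda>i\<in>{..<n}. z (ts i) \<omega>))"

end

theory Submission
  imports Defs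
begin

lemma floor_approx_tendsto:
  fixes x :: real
  shows "(\<lambda>n. real_of_int \<lfloor>real (Suc n) * x\<rfloor> / real (Suc n)) \<longlonglongrightarrow> x"
proof (rule tendsto_sandwich[where f="\<lambda>n. x - 1 / real (Suc n)" and h="\<lambda>n. x"])
  show "\<forall>\<^sub>F n in sequentially. x - 1 / real (Suc n) \<le> real_of_int \<lfloor>real (Suc n) * x\<rfloor> / real (Suc n)"
  proof (intro always_eventually allI)
    fix n
    have "real (Suc n) * x - 1 \<le> real_of_int \<lfloor>real (Suc n) * x\<rfloor>" by linarith
    then have "(real (Suc n) * x - 1) / real (Suc n) \<le> real_of_int \<lfloor>real (Suc n) * x\<rfloor> / real (Suc n)"
      by (intro divide_right_mono) auto
    moreover have "(real (Suc n) * x - 1) / real (Suc n) = x - 1 / real (Suc n)"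
      by (simp add: field_simps)
    ultimately show "x - 1 / real (Suc n) \<le> real_of_int \<lfloor>real (Suc n) * x\<rfloor> / real (Suc n)"
      by simp
  qed
  show "\<forall>\<^sub>F n in sequentially. real_of_int \<lfloor>real (Suc n) * x\<rfloor> / real (Suc n) \<le> x"
  proof (intro always_eventually allI)
    fix n
    have "real_of_int \<lfloor>real (Suc n) * x\<rfloor> \<le> real (Suc n) * x" by linarith
    then show "real_of_int \<lfloor>real (Suc n) * x\<rfloor> / real (Suc n) \<le> x"
      by (simp add: field_simps)
  qed
  have "(\<lambda>n. 1 / real (Suc n)) \<longlonglongrightarrow> 0" by (rule LIMSEQ_Suc[OF lim_const_over_n]) 
  then show "(\<lambda>n. x - 1 / real (Suc n)) \<longlonglongrightarrow> x" using tendsto_diff[of "\<lambda>_. x" x sequentially] by force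
qed auto

lemma joint_meas:
  fixes z :: "real^'d \<Rightarrow> 'w \<Rightarrow> real"
  assumes zm: "\<And>t. z t \<in> borel_measurable M"
    and zc: "\<And>\<omega>. \<omega> \<in> space M \<Longrightarrow> continuous_on UNIV (\<lambda>t. z t \<omega>)"
  shows "(\<lambda>x. z (snd x) (fst x)) \<in> borel_measurable (M \<Otimes>\<^sub>M lborel)"
proof (rule borel_measurable_LIMSEQ_real)
  define k :: "nat \<Rightarrow> real^'d \<Rightarrow> int^'d" where "k n s = (\<chi> i. \<lfloor>real (Suc n) * s$i\<rfloor>)" for n s
  define p :: "nat \<Rightarrow> int^'d \<Rightarrow> real^'d" where "p n a = (\<chi> i. real_of_int (a$i) / real (Suc n))" for n a
  show "(\<lambda>x. z (p n (k n (snd x))) (fst x)) \<in> borel_measurable (M \<Otimes>\<^sub>M lborel)" for n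
  proof (rule measurable_compose_countable[where f="\<lambda>a x. z (p n a) (fst x)"])
    show "(\<lambda>x. z (p n a) (fst x)) \<in> borel_measurable (M \<Otimes>\<^sub>M lborel)" for a
      using zm by measurable
    have "k n \<in> borel \<rightarrow>\<^sub>M count_space UNIV"
    proof (subst measurable_count_space_eq2_countable, safe)
      fix a :: "int^'d"
      have "k n -` {a} = {s. \<forall>i. \<lfloor>real (Suc n) * s$i\<rfloor> = a$i}"
        by (auto simp: k_def vec_eq_iff)
      moreover have "{s::real^'d. \<forall>i. \<lfloor>real (Suc n) * s$i\<rfloor> = a$i} \<in> sets borel"
        by measurable
      ultimately show "k n -` {a} \<inter> space borel \<in> sets borel" by simp
    qed auto
    then show "(\<lambda>x. k n (snd x)) \<in> M \<Otimes>\<^sub>M lborel \<rightarrow>\<^sub>M count_space UNIV"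
      by measurable
  qed
  fix x :: "'w \<times> (real^'d)" assume x: "x \<in> space (M \<Otimes>\<^sub>M lborel)"
  then have "fst x \<in> space M" by (auto simp: space_pair_measure)
  then have c: "continuous_on UNIV (\<lambda>t. z t (fst x))" by (rule zc)
  have "(\<lambda>n. p n (k n (snd x))) \<longlonglongrightarrow> snd x"
    by (rule vec_tendstoI, unfold p_def k_def vec_lambda_beta, rule floor_approx_tendsto)
  then show "(\<lambda>n. z (p n (k n (snd x))) (fst x)) \<longlonglongrightarrow> z (snd x) (fst x)"
    using c by (intro continuous_on_tendsto_compose[OF c]) auto
qed


lemma prod_int:
  fixes g :: "real^'d \<Rightarrow> real"
  assumes g: "integrable lborel g"
  shows "integrable (lborel \<Otimes>\<^sub>M lborel) (\<lambda>x. g (fst x) * g (snd x))"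
    and "(LINT x|(lborel \<Otimes>\<^sub>M lborel). g (fst x) * g (snd x)) = (LINT s|lborel. g s)^2"
proof -
  have gm[measurable]: "g \<in> borel_measurable lborel" using g by auto
  have fin: "(\<integral>\<^sup>+s. ennreal (norm (g s)) \<partial>lborel) < \<infinity>"
    using g integrable_iff_bounded by blast
  have "(\<integral>\<^sup>+x. ennreal (norm (g (fst x) * g (snd x))) \<partial>(lborel \<Otimes>\<^sub>M lborel))
      = (\<integral>\<^sup>+s. \<integral>\<^sup>+t. ennreal (norm (g s)) * ennreal (norm (g t)) \<partial>lborel \<partial>lborel)"
    by (subst lborel.nn_integral_fst[symmetric]) (auto simp: abs_mult ennreal_mult)
  also have "\<dots> = (\<integral>\<^sup>+s. ennreal (norm (g s)) * (\<integral>\<^sup>+t. ennreal (norm (g t)) \<partial>lborel) \<partial>lborel)"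
    by (simp add: nn_integral_cmult)
  also have "\<dots> = (\<integral>\<^sup>+s. ennreal (norm (g s)) \<partial>lborel) * (\<integral>\<^sup>+t. ennreal (norm (g t)) \<partial>lborel)"
    by (simp add: nn_integral_multc)
  also have "\<dots> < \<infinity>" using fin by (simp add: ennreal_mult_less_top)
  finally show int: "integrable (lborel \<Otimes>\<^sub>M lborel) (\<lambda>x. g (fst x) * g (snd x))"
    by (intro integrableI_bounded) auto
  have "(LINT x|(lborel \<Otimes>\<^sub>M lborel). g (fst x) * g (snd x)) = (LINT s|lborel. LINT t|lborel. g s * g t)"
    using lborel_pair.integral_fst'[OF int] by simp
  also have "\<dots> = (LINT s|lborel. g s * (LINT t|lborel. g t))" by simp
  also have "\<dots> = (LINT s|lborel. g s)^2" by (simp add: power2_eq_square)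
  finally show "(LINT x|(lborel \<Otimes>\<^sub>M lborel). g (fst x) * g (snd x)) = (LINT s|lborel. g s)^2" .
qed

lemma cross_moment:
  fixes w :: "real^'d \<Rightarrow> 'w \<Rightarrow> real"
  assumes wm: "\<And>s. w s \<in> borel_measurable M"
    and sq: "\<And>s. integrable M (\<lambda>\<omega>. (w s \<omega>)^2)"
    and K: "\<And>s. (LINT \<omega>|M. (w s \<omega>)^2) \<le> K"
  shows "integrable M (\<lambda>\<omega>. w s \<omega> * w t \<omega>)"
    and "(\<integral>\<^sup>+\<omega>. ennreal \<bar>w s \<omega> * w t \<omega>\<bar> \<partial>M) \<le> ennreal K"
proof -
  have pt: "\<bar>a * b\<bar> \<le> (a^2 + b^2) / 2" for a b :: real
  proof -
    have "0 \<le> (\<bar>a\<bar> - \<bar>b\<bar>)^2" by simp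
    then show ?thesis by (simp add: power2_eq_square abs_mult algebra_simps)
  qed
  have i2: "integrable M (\<lambda>\<omega>. ((w s \<omega>)^2 + (w t \<omega>)^2) / 2)"
    using sq by auto
  show int: "integrable M (\<lambda>\<omega>. w s \<omega> * w t \<omega>)"
  proof (rule Bochner_Integration.integrable_bound[OF i2])
    show "(\<lambda>\<omega>. w s \<omega> * w t \<omega>) \<in> borel_measurable M" using wm by measurable
    show "AE \<omega> in M. norm (w s \<omega> * w t \<omega>) \<le> norm (((w s \<omega>)^2 + (w t \<omega>)^2) / 2)"
      using pt by (auto intro!: AE_I2 order_trans[OF pt])
  qed
  have "(\<integral>\<^sup>+\<omega>. ennreal \<bar>w s \<omega> * w t \<omega>\<bar> \<partial>M) = ennreal (LINT \<omega>|M. \<bar>w s \<omega> * w t \<omega>\<bar>)"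
    using int by (intro nn_integral_eq_integral) auto
  also have "(LINT \<omega>|M. \<bar>w s \<omega> * w t \<omega>\<bar>) \<le> (LINT \<omega>|M. ((w s \<omega>)^2 + (w t \<omega>)^2) / 2)"
    using int i2 pt by (intro integral_mono) auto
  also have "\<dots> = ((LINT \<omega>|M. (w s \<omega>)^2) + (LINT \<omega>|M. (w t \<omega>)^2)) / 2"
    using sq by simp
  also have "\<dots> \<le> K" using K[of s] K[of t] by simp
  finally show "(\<integral>\<^sup>+\<omega>. ennreal \<bar>w s \<omega> * w t \<omega>\<bar> \<partial>M) \<le> ennreal K"
    by (simp add: ennreal_leI)
qed

lemma cov_formula:
  fixes w :: "real^'d \<Rightarrow> 'w \<Rightarrow> real" and \<phi> :: "real^'d \<Rightarrow> real" and M :: "'w measure"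
  assumes M: "prob_space M"
    and W: "(\<lambda>x. w (snd x) (fst x)) \<in> borel_measurable (M \<Otimes>\<^sub>M lborel)"
    and sq: "\<And>s. integrable M (\<lambda>\<omega>. (w s \<omega>)^2)"
    and K: "\<And>s. (LINT \<omega>|M. (w s \<omega>)^2) \<le> K"
    and \<phi>i: "integrable lborel \<phi>"
    and pw: "\<And>\<omega>. \<omega> \<in> space M \<Longrightarrow> integrable lborel (\<lambda>s. w s \<omega> * \<phi> s)"
  shows "integrable M (\<lambda>\<omega>. (LINT s|lborel. w s \<omega> * \<phi> s)^2)"
    and "(LINT \<omega>|M. (LINT s|lborel. w s \<omega> * \<phi> s)^2)
       = (LINT x|(lborel \<Otimes>\<^sub>M lborel). \<phi> (fst x) * \<phi> (snd x) * (LINT \<omega>|M. w (fst x) \<omega> * w (snd x) \<omega>))"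
proof -
  interpret prob_space M by (rule M)
  have sfP: "sigma_finite_measure (lborel \<Otimes>\<^sub>M lborel :: ((real^'d) \<times> (real^'d)) measure)"
    by (intro sigma_finite_pair_measure) unfold_locales
  interpret P: pair_sigma_finite M "lborel \<Otimes>\<^sub>M lborel :: ((real^'d) \<times> (real^'d)) measure"
    by (intro pair_sigma_finite.intro prob_space_imp_sigma_finite M sfP)
  have \<phi>m[measurable]: "\<phi> \<in> borel_measurable lborel" using \<phi>i by auto
  have wm[measurable]: "w s \<in> borel_measurable M" for s
    using measurable_compose[OF measurable_Pair2'[of s lborel M] W] by simp
  have W1[measurable]: "(\<lambda>y. w (fst (snd y)) (fst y)) \<in> borel_measurable (M \<Otimes>\<^sub>M (lborel \<Otimes>\<^sub>M lborel))"
  proof -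
    have "(\<lambda>y. (fst y, fst (snd y))) \<in> M \<Otimes>\<^sub>M (lborel \<Otimes>\<^sub>M lborel) \<rightarrow>\<^sub>M M \<Otimes>\<^sub>M (lborel :: (real^'d) measure)"
      by measurable
    from measurable_compose[OF this W] show ?thesis by simp
  qed
  have W2[measurable]: "(\<lambda>y. w (snd (snd y)) (fst y)) \<in> borel_measurable (M \<Otimes>\<^sub>M (lborel \<Otimes>\<^sub>M lborel))"
  proof -
    have "(\<lambda>y. (fst y, snd (snd y))) \<in> M \<Otimes>\<^sub>M (lborel \<Otimes>\<^sub>M lborel) \<rightarrow>\<^sub>M M \<Otimes>\<^sub>M (lborel :: (real^'d) measure)"
      by measurable
    from measurable_compose[OF this W] show ?thesis by simp
  qed
  define g where "g \<omega> x = w (fst x) \<omega> * \<phi> (fst x) * (w (snd x) \<omega> * \<phi> (snd x))" for \<omega> x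
  have gm[measurable]: "case_prod g \<in> borel_measurable (M \<Otimes>\<^sub>M (lborel \<Otimes>\<^sub>M lborel))"
  proof -
    have "case_prod g = (\<lambda>y. w (fst (snd y)) (fst y) * \<phi> (fst (snd y)) * (w (snd (snd y)) (fst y) * \<phi> (snd (snd y))))"
      by (auto simp: g_def fun_eq_iff)
    also have "\<dots> \<in> borel_measurable (M \<Otimes>\<^sub>M (lborel \<Otimes>\<^sub>M lborel))" by measurable
    finally show ?thesis .
  qed
  have pint: "integrable (lborel \<Otimes>\<^sub>M lborel) (\<lambda>x. \<phi> (fst x) * \<phi> (snd x))"
    by (rule prod_int(1)[OF \<phi>i])
  have "(\<integral>\<^sup>+y. ennreal (norm (case_prod g y)) \<partial>(M \<Otimes>\<^sub>M (lborel \<Otimes>\<^sub>M lborel)))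
      = (\<integral>\<^sup>+x. \<integral>\<^sup>+\<omega>. ennreal (norm (g \<omega> x)) \<partial>M \<partial>(lborel \<Otimes>\<^sub>M lborel))"
    by (subst P.nn_integral_snd[symmetric]) (auto simp: case_prod_beta)
  also have "\<dots> \<le> (\<integral>\<^sup>+x. ennreal (norm (\<phi> (fst x) * \<phi> (snd x))) * ennreal K \<partial>(lborel \<Otimes>\<^sub>M lborel))"
  proof (rule nn_integral_mono)
    fix x :: "(real^'d) \<times> (real^'d)"
    have "(\<integral>\<^sup>+\<omega>. ennreal (norm (g \<omega> x)) \<partial>M)
        = (\<integral>\<^sup>+\<omega>. ennreal (norm (\<phi> (fst x) * \<phi> (snd x))) * ennreal \<bar>w (fst x) \<omega> * w (snd x) \<omega>\<bar> \<partial>M)"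
      by (intro nn_integral_cong) (simp add: g_def abs_mult ennreal_mult[symmetric] mult_ac)
    also have "\<dots> = ennreal (norm (\<phi> (fst x) * \<phi> (snd x))) * (\<integral>\<^sup>+\<omega>. ennreal \<bar>w (fst x) \<omega> * w (snd x) \<omega>\<bar> \<partial>M)"
      by (rule nn_integral_cmult) measurable
    also have "\<dots> \<le> ennreal (norm (\<phi> (fst x) * \<phi> (snd x))) * ennreal K"
      by (intro mult_left_mono cross_moment(2)[OF wm sq K]) auto
    finally show "(\<integral>\<^sup>+\<omega>. ennreal (norm (g \<omega> x)) \<partial>M) \<le> ennreal (norm (\<phi> (fst x) * \<phi> (snd x))) * ennreal K" .
  qed
  also have "\<dots> = (\<integral>\<^sup>+x. ennreal (norm (\<phi> (fst x) * \<phi> (snd x))) \<partial>(lborel \<Otimes>\<^sub>M lborel)) * ennreal K"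
    by (rule nn_integral_multc) measurable
  also have "\<dots> < \<infinity>"
  proof -
    have "(\<integral>\<^sup>+x. ennreal (norm (\<phi> (fst x) * \<phi> (snd x))) \<partial>(lborel \<Otimes>\<^sub>M lborel)) < \<infinity>"
      using pint[unfolded integrable_iff_bounded] by (rule conjunct2)
    then show ?thesis by (simp add: ennreal_mult_less_top)
  qed
  finally have gint: "integrable (M \<Otimes>\<^sub>M (lborel \<Otimes>\<^sub>M lborel)) (case_prod g)"
    by (intro integrableI_bounded) auto
  have pathw: "(LINT x|(lborel \<Otimes>\<^sub>M lborel). g \<omega> x) = (LINT s|lborel. w s \<omega> * \<phi> s)^2"
    if "\<omega> \<in> space M" for \<omega>
    using prod_int(2)[OF pw[OF that]] by (simp add: g_def)
  have "integrable M (\<lambda>\<omega>. LINT x|(lborel \<Otimes>\<^sub>M lborel). g \<omega> x)"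
    using P.integrable_fst'[OF gint] by simp
  then show "integrable M (\<lambda>\<omega>. (LINT s|lborel. w s \<omega> * \<phi> s)^2)"
  proof -
    have "integrable M (\<lambda>\<omega>. LINT x|(lborel \<Otimes>\<^sub>M lborel). g \<omega> x) = integrable M (\<lambda>\<omega>. (LINT s|lborel. w s \<omega> * \<phi> s)^2)"
      using pathw by (intro Bochner_Integration.integrable_cong refl) auto
    with \<open>integrable M (\<lambda>\<omega>. LINT x|(lborel \<Otimes>\<^sub>M lborel). g \<omega> x)\<close> show ?thesis by simp
  qed
  have "(LINT \<omega>|M. (LINT s|lborel. w s \<omega> * \<phi> s)^2) = (LINT \<omega>|M. LINT x|(lborel \<Otimes>\<^sub>M lborel). g \<omega> x)"
    by (intro Bochner_Integration.integral_cong) (auto simp: pathw)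
  also have "\<dots> = (LINT x|(lborel \<Otimes>\<^sub>M lborel). LINT \<omega>|M. g \<omega> x)"
    using P.integral_fst'[OF gint] P.integral_snd[OF gint] by simp
  also have "\<dots> = (LINT x|(lborel \<Otimes>\<^sub>M lborel). \<phi> (fst x) * \<phi> (snd x) * (LINT \<omega>|M. w (fst x) \<omega> * w (snd x) \<omega>))"
  proof (intro Bochner_Integration.integral_cong refl)
    fix x :: "(real^'d) \<times> (real^'d)"
    have "(LINT \<omega>|M. g \<omega> x) = (LINT \<omega>|M. \<phi> (fst x) * \<phi> (snd x) * (w (fst x) \<omega> * w (snd x) \<omega>))"
      by (intro Bochner_Integration.integral_cong) (auto simp: g_def mult_ac)
    then show "(LINT \<omega>|M. g \<omega> x) = \<phi> (fst x) * \<phi> (snd x) * (LINT \<omega>|M. w (fst x) \<omega> * w (snd x) \<omega>)"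
      by simp
  qed
  finally show "(LINT \<omega>|M. (LINT s|lborel. w s \<omega> * \<phi> s)^2)
       = (LINT x|(lborel \<Otimes>\<^sub>M lborel). \<phi> (fst x) * \<phi> (snd x) * (LINT \<omega>|M. w (fst x) \<omega> * w (snd x) \<omega>))" .
qed


lemma gauss_facts:
  fixes z :: "'t \<Rightarrow> 'w \<Rightarrow> real"
  assumes M: "prob_space M" and G: "centered_gaussian_process M z"
  shows "z t \<in> borel_measurable M" and "integrable M (\<lambda>\<omega>. (z t \<omega>)^2)"
proof -
  have "centered_gaussian_rv M (\<lambda>\<omega>. \<Sum>i<(1::nat). (\<lambda>_. 1::real) i * z ((\<lambda>_. t) i) \<omega>)"
    using G unfolding centered_gaussian_process_def by (rule spec[of _ "\<lambda>_. 1", OF spec[of _ "\<lambda>_. t", OF spec[of _ 1]]])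
  then have g: "centered_gaussian_rv M (z t)" by simp
  then show zm: "z t \<in> borel_measurable M" unfolding centered_gaussian_rv_def by simp
  from g consider (n) \<sigma> where "\<sigma> > 0" "distributed M lborel (z t) (\<lambda>x. ennreal (normal_density 0 \<sigma> x))"
    | (z) "AE \<omega> in M. z t \<omega> = 0"
    unfolding centered_gaussian_rv_def by blast
  then show "integrable M (\<lambda>\<omega>. (z t \<omega>)^2)"
  proof cases
    case n
    have "integrable lborel (\<lambda>x. normal_density 0 \<sigma> x * x^2)"
      using integrable_normal_moment[where \<mu>=0 and \<sigma>=\<sigma> and k=2] n(1) by simp
    then show ?thesis
      using distributed_integrable[OF n(2), of "\<lambda>x. x^2"] by simp
  next
    case z
    show ?thesis
      by (rule integrable_cong_AE_imp[of _ "\<lambda>_. 0"]) (use z zm in auto)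
  qed
qed

lemma stat_int:
  fixes z :: "'t::plus \<Rightarrow> 'w \<Rightarrow> real" and n :: nat
  assumes S: "stationary_process M z" and zm: "\<And>t. z t \<in> borel_measurable M"
    and g: "g \<in> borel_measurable (PiM {..<n} (\<lambda>_. borel))"
  shows "(LINT \<omega>|M. g (\<lambda>i\<in>{..<n}. z (ts i + h) \<omega>)) = (LINT \<omega>|M. g (\<lambda>i\<in>{..<n}. z (ts i) \<omega>))"
    and "(\<integral>\<^sup>+\<omega>. ennreal (g (\<lambda>i\<in>{..<n}. z (ts i + h) \<omega>)) \<partial>M) = (\<integral>\<^sup>+\<omega>. ennreal (g (\<lambda>i\<in>{..<n}. z (ts i) \<omega>)) \<partial>M)"
proof -
  have D: "distr M (PiM {..<n} (\<lambda>_. borel)) (\<lambda>\<omega>. \<lambda>i\<in>{..<n}. z (ts i + h) \<omega>)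
      = distr M (PiM {..<n} (\<lambda>_. borel)) (\<lambda>\<omega>. \<lambda>i\<in>{..<n}. z (ts i) \<omega>)"
    using S unfolding stationary_process_def by (rule spec[of _ h, OF spec[of _ ts, OF spec[of _ n]]])
  have m1: "(\<lambda>\<omega>. \<lambda>i\<in>{..<n}. z (ts i + h) \<omega>) \<in> M \<rightarrow>\<^sub>M PiM {..<n} (\<lambda>_. borel)"
    by (intro measurable_restrict zm)
  have m2: "(\<lambda>\<omega>. \<lambda>i\<in>{..<n}. z (ts i) \<omega>) \<in> M \<rightarrow>\<^sub>M PiM {..<n} (\<lambda>_. borel)"
    by (intro measurable_restrict zm)
  show "(LINT \<omega>|M. g (\<lambda>i\<in>{..<n}. z (ts i + h) \<omega>)) = (LINT \<omega>|M. g (\<lambda>i\<in>{..<n}. z (ts i) \<omega>))"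
    using integral_distr[OF m1 g] integral_distr[OF m2 g] D by simp
  have g': "(\<lambda>x. ennreal (g x)) \<in> borel_measurable (PiM {..<n} (\<lambda>_. borel))" using g by measurable
  show "(\<integral>\<^sup>+\<omega>. ennreal (g (\<lambda>i\<in>{..<n}. z (ts i + h) \<omega>)) \<partial>M) = (\<integral>\<^sup>+\<omega>. ennreal (g (\<lambda>i\<in>{..<n}. z (ts i) \<omega>)) \<partial>M)"
    using nn_integral_distr[OF m1, of "\<lambda>x. ennreal (g x)"] nn_integral_distr[OF m2, of "\<lambda>x. ennreal (g x)"] D g' by simp
qed

lemma stat_sq:
  fixes z :: "'t::monoid_add \<Rightarrow> 'w \<Rightarrow> real"
  assumes S: "stationary_process M z" and zm: "\<And>t. z t \<in> borel_measurable M"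
  shows "(LINT \<omega>|M. (z t \<omega>)^2) = (LINT \<omega>|M. (z 0 \<omega>)^2)"
    and "(\<integral>\<^sup>+\<omega>. ennreal ((z t \<omega>)^2) \<partial>M) = (\<integral>\<^sup>+\<omega>. ennreal ((z 0 \<omega>)^2) \<partial>M)"
proof -
  have g: "(\<lambda>f. (f (0::nat))^2 :: real) \<in> borel_measurable (PiM {..<1} (\<lambda>_. borel))"
    by measurable
  show "(LINT \<omega>|M. (z t \<omega>)^2) = (LINT \<omega>|M. (z 0 \<omega>)^2)"
    using stat_int(1)[OF S zm g, of "\<lambda>_. 0" t] by simp
  show "(\<integral>\<^sup>+\<omega>. ennreal ((z t \<omega>)^2) \<partial>M) = (\<integral>\<^sup>+\<omega>. ennreal ((z 0 \<omega>)^2) \<partial>M)"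
    using stat_int(2)[OF S zm g, of "\<lambda>_. 0" t] by simp
qed

lemma stat_cov:
  fixes z :: "'t::monoid_add \<Rightarrow> 'w \<Rightarrow> real"
  assumes S: "stationary_process M z" and zm: "\<And>t. z t \<in> borel_measurable M"
  shows "(LINT \<omega>|M. z (s + h) \<omega> * z (t + h) \<omega>) = (LINT \<omega>|M. z s \<omega> * z t \<omega>)"
proof -
  have g: "(\<lambda>f. f (0::nat) * f 1 :: real) \<in> borel_measurable (PiM {..<2} (\<lambda>_. borel))"
    by measurable
  show ?thesis
    using stat_int(1)[OF S zm g, of "\<lambda>i. if i = 0 then s else t" h] by simp
qed


lemma infnorm_lt_iff:
  fixes x :: "real^'n"
  shows "infnorm x < r \<longleftrightarrow> (\<forall>i. \<bar>x$i\<bar> < r)"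
proof -
  have "infnorm x = Max (range (\<lambda>i. \<bar>x$i\<bar>))"
    unfolding infnorm_cart by (simp add: full_SetCompr_eq cSup_eq_Max)
  then show ?thesis by (simp add: Max_less_iff)
qed

lemma abs_lt_iff2: "\<bar>a::real\<bar> < c \<longleftrightarrow> -c < a \<and> a < c" by auto

lemma cube0_box:
  "cube (0::real^'d) B = box (\<chi> i. -(B/2)) (\<chi> i. B/2)"
  apply (rule set_eqI)
  by (simp only: cube_def mem_Collect_eq diff_zero infnorm_lt_iff mem_box_cart vec_lambda_beta abs_lt_iff2)

lemma cube_open: "open (cube (0::real^'d) B)"
  by (simp add: cube0_box open_box)

lemma cube_sets[measurable]: "cube (0::real^'d) B \<in> sets lborel"
  by (simp add: cube0_box)

lemma cube_bounded: "bounded (cube (0::real^'d) B)"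
  by (simp add: cube0_box)

lemma cube_measure:
  assumes B: "B > 0"
  shows "emeasure lborel (cube (0::real^'d) B) = ennreal (B ^ CARD('d))"
proof -
  have bb: "b \<in> Basis \<Longrightarrow> ((\<chi> i. B/2) - (\<chi> i. -(B/2))) \<bullet> b = B" for b :: "real^'d"
    by (auto simp: Basis_vec_def inner_axis)
  have bb1: "b \<in> Basis \<Longrightarrow> (\<chi> i. -(B/2)) \<bullet> b \<le> (\<chi> i. B/2) \<bullet> b" for b :: "real^'d"
    using B by (auto simp: Basis_vec_def inner_axis)
  have "emeasure lborel (cube (0::real^'d) B) = (\<Prod>b\<in>(Basis::(real^'d) set). ((\<chi> i. B/2) - (\<chi> i. -(B/2))) \<bullet> b)"
    unfolding cube0_box by (rule emeasure_lborel_box[OF bb1])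
  also have "(\<Prod>b\<in>(Basis::(real^'d) set). ((\<chi> i. B/2) - (\<chi> i. -(B/2))) \<bullet> b) = (\<Prod>b\<in>(Basis::(real^'d) set). B)"
    by (intro prod.cong refl bb)
  also have "\<dots> = B ^ CARD('d)"
    by simp
  finally show ?thesis .
qed

lemma smooth_cont:
  assumes "smooth_fun f" shows "continuous_on UNIV f"
proof -
  from assms obtain S where S: "f \<in> S" "\<forall>g\<in>S. (\<forall>x. g differentiable (at x)) \<and>
       (\<forall>i. (\<lambda>x. frechet_derivative g (at x) (axis i 1)) \<in> S)"
    unfolding smooth_fun_def by (elim exE conjE) (rule that)
  have "\<forall>x. f differentiable (at x)" using bspec[OF S(2) S(1)] by (rule conjunct1)
  then show ?thesis
    by (intro continuous_at_imp_continuous_on ballI differentiable_imp_continuous_within) auto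
qed

lemma cont_supp_integrable:
  fixes f :: "real^'d \<Rightarrow> real"
  assumes c: "continuous_on UNIV f" and K: "bounded K" and z: "\<And>t. t \<notin> K \<Longrightarrow> f t = 0"
  shows "integrable lborel f"
proof -
  obtain r x0 where r: "K \<subseteq> cball x0 r" using K[unfolded bounded_subset_cball] by (elim exE conjE)
  have "integrable lborel (\<lambda>x. indicator (cball x0 r) x *\<^sub>R f x)"
    by (rule borel_integrable_compact) (auto intro: continuous_on_subset[OF c])
  moreover have "(\<lambda>x. indicator (cball x0 r) x *\<^sub>R f x) = f"
  proof
    fix x show "indicator (cball x0 r) x *\<^sub>R f x = f x"
      using r z[of x] by (cases "x \<in> cball x0 r") (auto simp: subset_iff)
  qed
  ultimately show ?thesis by simp
qed

lemma cont_ind_integrable: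
  fixes f :: "real^'d \<Rightarrow> real"
  assumes c: "continuous_on UNIV f" and K: "bounded C" and Cm: "C \<in> sets lborel"
  shows "integrable lborel (\<lambda>s. indicator C s * f s)"
proof -
  have "integrable lborel (\<lambda>x. indicator (closure C) x *\<^sub>R f x)"
    by (rule borel_integrable_compact) (auto intro: continuous_on_subset[OF c] simp: compact_closure K)
  then have "integrable lborel (\<lambda>x. indicator C x *\<^sub>R (indicator (closure C) x *\<^sub>R f x))"
    by (rule integrable_mult_indicator[OF Cm])
  moreover have "(\<lambda>x. indicator C x *\<^sub>R (indicator (closure C) x *\<^sub>R f x)) = (\<lambda>s. indicator C s * f s)"
    using closure_subset[of C] by (auto simp: fun_eq_iff indicator_def)
  ultimately show ?thesis by simp
qed

lemma integral_translate:
  fixes f :: "real^'d \<Rightarrow> real"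
  assumes f: "f \<in> borel_measurable borel"
  shows "(LINT s|lborel. f (s - c)) = (LINT s|lborel. f s)"
proof -
  have "(LINT s|lborel. f s) = (LINT s|distr lborel borel ((+) (-c)). f s)"
    by (simp add: lborel_distr_plus)
  also have "\<dots> = (LINT s|lborel. f (-c + s))"
    by (rule integral_distr) (use f in auto)
  finally show ?thesis by simp
qed


lemma cube_disjoint:
  fixes p q u :: "real^'d"
  assumes "infnorm (p - q) \<ge> B" "u - p \<in> cube 0 B" "u - q \<in> cube 0 B" shows False
proof -
  have a: "infnorm (u - p) < B/2" "infnorm (u - q) < B/2" using assms(2,3) by (auto simp: cube_def)
  have "p - q = (u - q) + (- (u - p))" by simp
  then have "infnorm (p - q) \<le> infnorm (u - q) + infnorm (- (u - p))"
    by (metis infnorm_triangle)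
  moreover have "infnorm (- (u - p)) = infnorm (u - p)" by (rule infnorm_neg)
  ultimately have "infnorm (p - q) < B" using a by linarith
  then show False using assms(1) by simp
qed

lemma signal:
  fixes \<psi> :: "nat \<Rightarrow> real^'d \<Rightarrow> real" and \<tau> :: "nat \<Rightarrow> real^'d"
  assumes \<psi>c: "\<And>j. j\<in>{1..m} \<Longrightarrow> continuous_on UNIV (\<psi> j)"
    and supp: "\<forall>j\<in>{1..m}. \<forall>t. t \<notin> cube 0 B \<longrightarrow> \<psi> j t = 0"
    and orth: "\<forall>j\<in>{1..m}. \<forall>k\<in>{1..m}.
           (LINT t:cube 0 B|lborel. \<psi> j t * \<psi> k t) = (if j = k then 1 else 0)"
    and sep: "\<forall>l\<in>{1..N}. \<forall>i\<in>{1..N}. l \<noteq> i \<longrightarrow> infnorm (\<tau> l - \<tau> i) \<ge> B"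
    and l: "l \<in> {1..N}"
  shows "Sfun \<psi> m (\<lambda>t. \<Sum>i=1..N. \<Sum>j=1..m. a i j * \<psi> j (t - \<tau> i)) (\<tau> l) = (\<Sum>j=1..m. (a l j)^2)"
proof -
  let ?C = "cube (0::real^'d) B"
  have int_pair: "integrable lborel (\<lambda>s. \<psi> k (s - \<tau> i) * \<psi> j (s - \<tau> l))"
    if "j \<in> {1..m}" "k \<in> {1..m}" for i k j
  proof (rule cont_supp_integrable)
    have "continuous_on UNIV (\<lambda>s. \<psi> k (s - \<tau> i))"
      by (rule continuous_on_compose2[OF \<psi>c[OF that(2)]]) (auto intro!: continuous_intros)
    moreover have "continuous_on UNIV (\<lambda>s. \<psi> j (s - \<tau> l))"
      by (rule continuous_on_compose2[OF \<psi>c[OF that(1)]]) (auto intro!: continuous_intros)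
    ultimately show "continuous_on UNIV (\<lambda>s. \<psi> k (s - \<tau> i) * \<psi> j (s - \<tau> l))"
      by (rule continuous_on_mult)
    show "bounded ((\<lambda>x. \<tau> l + x) ` ?C)" by (rule bounded_translation[OF cube_bounded])
    fix t assume "t \<notin> (\<lambda>x. \<tau> l + x) ` ?C"
    then have "t - \<tau> l \<notin> ?C" by (metis (no_types, lifting) add.commute diff_add_cancel image_eqI)
    then show "\<psi> k (t - \<tau> i) * \<psi> j (t - \<tau> l) = 0" using supp that by auto
  qed
  have ij0: "\<psi> k (s - \<tau> i) * \<psi> j (s - \<tau> l) = 0"
    if "i \<in> {1..N}" "i \<noteq> l" "j \<in> {1..m}" "k \<in> {1..m}" for i k j s
  proof (rule ccontr)
    assume "\<psi> k (s - \<tau> i) * \<psi> j (s - \<tau> l) \<noteq> 0"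
    then have "s - \<tau> i \<in> ?C" "s - \<tau> l \<in> ?C" using supp that by auto
    moreover have "infnorm (\<tau> l - \<tau> i) \<ge> B" using sep l that by auto
    ultimately show False by (intro cube_disjoint[of B "\<tau> l" "\<tau> i" s]) auto
  qed
  have same: "(LINT s|lborel. \<psi> k (s - \<tau> l) * \<psi> j (s - \<tau> l)) = (if k = j then 1 else 0)"
    if "j \<in> {1..m}" "k \<in> {1..m}" for k j
  proof -
    have cm: "(\<lambda>s. \<psi> k s * \<psi> j s) \<in> borel_measurable borel"
      by (intro borel_measurable_continuous_onI continuous_on_mult \<psi>c that)
    have "(LINT s|lborel. \<psi> k (s - \<tau> l) * \<psi> j (s - \<tau> l)) = (LINT s|lborel. \<psi> k s * \<psi> j s)"
      using integral_translate[OF cm, of "\<tau> l"] by simp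
    also have "\<dots> = (LINT t:?C|lborel. \<psi> k t * \<psi> j t)"
      unfolding set_lebesgue_integral_def
      by (intro Bochner_Integration.integral_cong refl) (use supp that in \<open>auto simp: indicator_def\<close>)
    also have "\<dots> = (if k = j then 1 else 0)" using orth that by auto
    finally show ?thesis .
  qed
  have corr: "corr (\<lambda>t. \<Sum>i=1..N. \<Sum>j=1..m. a i j * \<psi> j (t - \<tau> i)) (\<psi> j) (\<tau> l) = a l j"
    if j: "j \<in> {1..m}" for j
  proof -
    have "corr (\<lambda>t. \<Sum>i=1..N. \<Sum>j=1..m. a i j * \<psi> j (t - \<tau> i)) (\<psi> j) (\<tau> l)
        = (LINT s|lborel. (\<Sum>i=1..N. \<Sum>k=1..m. a i k * (\<psi> k (s - \<tau> i) * \<psi> j (s - \<tau> l))))"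
      unfolding corr_def
      by (intro Bochner_Integration.integral_cong refl) (simp add: sum_distrib_right mult.assoc)
    also have "\<dots> = (\<Sum>i=1..N. \<Sum>k=1..m. a i k * (LINT s|lborel. \<psi> k (s - \<tau> i) * \<psi> j (s - \<tau> l)))"
    proof -
      have ii: "integrable lborel (\<lambda>s. a i k * (\<psi> k (s - \<tau> i) * \<psi> j (s - \<tau> l)))" if "k \<in> {1..m}" for i k
        using int_pair[OF j that] by simp
      have "(LINT s|lborel. (\<Sum>i=1..N. \<Sum>k=1..m. a i k * (\<psi> k (s - \<tau> i) * \<psi> j (s - \<tau> l))))
          = (\<Sum>i=1..N. LINT s|lborel. (\<Sum>k=1..m. a i k * (\<psi> k (s - \<tau> i) * \<psi> j (s - \<tau> l))))"
        by (rule Bochner_Integration.integral_sum) (intro Bochner_Integration.integrable_sum ii)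
      also have "\<dots> = (\<Sum>i=1..N. \<Sum>k=1..m. LINT s|lborel. a i k * (\<psi> k (s - \<tau> i) * \<psi> j (s - \<tau> l)))"
        by (intro sum.cong refl Bochner_Integration.integral_sum ii)
      finally show ?thesis by simp
    qed
    also have "\<dots> = (\<Sum>i=1..N. \<Sum>k=1..m. a i k * (if i = l then (if k = j then 1 else 0) else 0))"
    proof (intro sum.cong refl)
      fix i k assume i: "i \<in> {1..N}" and k: "k \<in> {1..m}"
      show "a i k * (LINT s|lborel. \<psi> k (s - \<tau> i) * \<psi> j (s - \<tau> l)) = a i k * (if i = l then (if k = j then 1 else 0) else 0)"
      proof (cases "i = l")
        case True then show ?thesis using same[OF j k] by simp
      next
        case False
        have "(\<lambda>s. \<psi> k (s - \<tau> i) * \<psi> j (s - \<tau> l)) = (\<lambda>s. 0)"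
          by (rule ext) (rule ij0[OF i False j k])
        then show ?thesis using False by simp
      qed
    qed
    also have "\<dots> = (\<Sum>i=1..N. if i = l then (\<Sum>k=1..m. if k = j then a l k else 0) else 0)"
    proof (intro sum.cong refl)
      fix i
      have aux: "(\<Sum>k=1..m. a l k * (if k = j then 1 else 0)) = (\<Sum>k=1..m. if k = j then a l k else 0)"
        by (rule sum.cong) auto
      show "(\<Sum>k=1..m. a i k * (if i = l then (if k = j then 1 else 0) else 0)) = (if i = l then (\<Sum>k=1..m. if k = j then a l k else 0) else 0)"
        by (cases "i = l") (simp_all only: aux simp_thms(6) if_True if_False mult_zero_right sum.neutral_const)
    qed
    also have "\<dots> = (\<Sum>k=1..m. if k = j then a l k else 0)"
      using l by (simp add: sum.delta)
    also have "\<dots> = a l j" using j by (simp add: sum.delta)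
    finally show ?thesis .
  qed
  show ?thesis unfolding Sfun_def using corr by (intro sum.cong refl) simp
qed


lemma bessel:
  fixes \<psi> :: "nat \<Rightarrow> real^'d \<Rightarrow> real" and f :: "real^'d \<Rightarrow> real"
  assumes fc: "continuous_on UNIV f"
    and \<psi>c: "\<And>j. j\<in>{1..m} \<Longrightarrow> continuous_on UNIV (\<psi> j)"
    and supp: "\<forall>j\<in>{1..m}. \<forall>t. t \<notin> cube 0 B \<longrightarrow> \<psi> j t = 0"
    and orth: "\<forall>j\<in>{1..m}. \<forall>k\<in>{1..m}.
           (LINT t:cube 0 B|lborel. \<psi> j t * \<psi> k t) = (if j = k then 1 else 0)"
  shows "(\<Sum>j=1..m. (corr f (\<psi> j) 0)^2) \<le> (LINT s|lborel. indicator (cube 0 B) s * (f s)^2)"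
proof -
  let ?C = "cube (0::real^'d) B"
  define c where "c j = corr f (\<psi> j) 0" for j
  have integ: "integrable lborel (\<lambda>s. indicator ?C s * g s)" if "continuous_on UNIV g" for g :: "real^'d \<Rightarrow> real"
    by (rule cont_ind_integrable[OF that cube_bounded cube_sets])
  have i1: "integrable lborel (\<lambda>s. indicator ?C s * (f s)^2)"
    by (intro integ continuous_intros fc)
  have i2: "integrable lborel (\<lambda>s. indicator ?C s * (f s * \<psi> j s))" if "j \<in> {1..m}" for j
    by (intro integ continuous_on_mult fc \<psi>c that)
  have i3: "integrable lborel (\<lambda>s. indicator ?C s * (\<psi> j s * \<psi> k s))" if "j \<in> {1..m}" "k \<in> {1..m}" for j k
    by (intro integ continuous_on_mult \<psi>c that)
  have cj: "(LINT s|lborel. indicator ?C s * (f s * \<psi> j s)) = c j" if "j \<in> {1..m}" for j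
    unfolding c_def corr_def
    by (intro Bochner_Integration.integral_cong refl) (use supp that in \<open>auto simp: indicator_def\<close>)
  have oj: "(LINT s|lborel. indicator ?C s * (\<psi> j s * \<psi> k s)) = (if j = k then 1 else 0)"
    if "j \<in> {1..m}" "k \<in> {1..m}" for j k
    using orth that by (simp add: set_lebesgue_integral_def)
  define h where "h s = f s - (\<Sum>j=1..m. c j * \<psi> j s)" for s
  have pt: "indicator ?C s * (h s)^2 = indicator ?C s * (f s)^2
      - 2 * (\<Sum>j=1..m. c j * (indicator ?C s * (f s * \<psi> j s)))
      + (\<Sum>j=1..m. \<Sum>k=1..m. c j * c k * (indicator ?C s * (\<psi> j s * \<psi> k s)))" for s
  proof -
    define i where "i = (indicator ?C s :: real)"
    define S where "S = (\<Sum>j=1..m. c j * \<psi> j s)"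
    have e1: "i * (f s * S) = (\<Sum>j=1..m. c j * (i * (f s * \<psi> j s)))"
      unfolding S_def by (simp add: sum_distrib_left mult_ac)
    have e2: "i * S^2 = (\<Sum>j=1..m. \<Sum>k=1..m. c j * c k * (i * (\<psi> j s * \<psi> k s)))"
      unfolding S_def power2_eq_square by (simp add: sum_distrib_left sum_distrib_right mult_ac)
    have "i * (h s)^2 = i * (f s)^2 - 2 * (i * (f s * S)) + i * S^2"
      unfolding h_def S_def[symmetric] by (simp add: power2_diff algebra_simps)
    then show ?thesis using e1 e2 by (simp add: i_def)
  qed
  have "0 \<le> (LINT s|lborel. indicator ?C s * (h s)^2)"
    by (intro integral_nonneg_AE) auto
  also have "(LINT s|lborel. indicator ?C s * (h s)^2) = (LINT s|lborel. indicator ?C s * (f s)^2)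
      - 2 * (\<Sum>j=1..m. c j * (LINT s|lborel. indicator ?C s * (f s * \<psi> j s)))
      + (\<Sum>j=1..m. \<Sum>k=1..m. c j * c k * (LINT s|lborel. indicator ?C s * (\<psi> j s * \<psi> k s)))"
  proof -
    have iS1: "integrable lborel (\<lambda>s. \<Sum>j=1..m. c j * (indicator ?C s * (f s * \<psi> j s)))"
      by (intro Bochner_Integration.integrable_sum integrable_mult_right i2)
    have iS2: "integrable lborel (\<lambda>s. \<Sum>j=1..m. \<Sum>k=1..m. c j * c k * (indicator ?C s * (\<psi> j s * \<psi> k s)))"
      by (intro Bochner_Integration.integrable_sum integrable_mult_right i3)
    have "(LINT s|lborel. indicator ?C s * (h s)^2) = (LINT s|lborel. indicator ?C s * (f s)^2)
      - 2 * (LINT s|lborel. (\<Sum>j=1..m. c j * (indicator ?C s * (f s * \<psi> j s))))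
      + (LINT s|lborel. (\<Sum>j=1..m. \<Sum>k=1..m. c j * c k * (indicator ?C s * (\<psi> j s * \<psi> k s))))"
      unfolding pt using i1 iS1 iS2 by simp
    also have "(LINT s|lborel. (\<Sum>j=1..m. c j * (indicator ?C s * (f s * \<psi> j s))))
        = (\<Sum>j=1..m. c j * (LINT s|lborel. indicator ?C s * (f s * \<psi> j s)))"
      by (subst Bochner_Integration.integral_sum) (auto intro: integrable_mult_right i2)
    also have "(LINT s|lborel. (\<Sum>j=1..m. \<Sum>k=1..m. c j * c k * (indicator ?C s * (\<psi> j s * \<psi> k s))))
        = (\<Sum>j=1..m. LINT s|lborel. (\<Sum>k=1..m. c j * c k * (indicator ?C s * (\<psi> j s * \<psi> k s))))"
      by (rule Bochner_Integration.integral_sum) (intro Bochner_Integration.integrable_sum integrable_mult_right i3)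
    also have "\<dots> = (\<Sum>j=1..m. \<Sum>k=1..m. c j * c k * (LINT s|lborel. indicator ?C s * (\<psi> j s * \<psi> k s)))"
      by (intro sum.cong refl, subst Bochner_Integration.integral_sum) (auto intro: integrable_mult_right i3)
    finally show ?thesis .
  qed
  also have "\<dots> = (LINT s|lborel. indicator ?C s * (f s)^2) - 2 * (\<Sum>j=1..m. (c j)^2) + (\<Sum>j=1..m. (c j)^2)"
  proof -
    have a: "(\<Sum>j=1..m. c j * (LINT s|lborel. indicator ?C s * (f s * \<psi> j s))) = (\<Sum>j=1..m. (c j)^2)"
      by (intro sum.cong refl) (simp add: cj power2_eq_square)
    have b: "(\<Sum>j=1..m. \<Sum>k=1..m. c j * c k * (LINT s|lborel. indicator ?C s * (\<psi> j s * \<psi> k s)))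
        = (\<Sum>j=1..m. (c j)^2)"
    proof (intro sum.cong refl)
      fix j assume j: "j \<in> {1..m}"
      have "(\<Sum>k=1..m. c j * c k * (LINT s|lborel. indicator ?C s * (\<psi> j s * \<psi> k s)))
          = (\<Sum>k=1..m. if j = k then c j * c k else 0)"
      proof (intro sum.cong refl)
        fix k assume "k \<in> {1..m}"
        then show "c j * c k * (LINT s|lborel. indicator ?C s * (\<psi> j s * \<psi> k s)) = (if j = k then c j * c k else 0)"
          using oj[OF j] by simp
      qed
      also have "\<dots> = (c j)^2" using j by (simp add: sum.delta power2_eq_square)
      finally show "(\<Sum>k=1..m. c j * c k * (LINT s|lborel. indicator ?C s * (\<psi> j s * \<psi> k s))) = (c j)^2" .
    qed
    show ?thesis using a b by simp
  qed
  finally show ?thesis unfolding c_def by simp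
qed


lemma noise_const:
  fixes M :: "'w measure" and z :: "real^'d \<Rightarrow> 'w \<Rightarrow> real"
    and \<psi> :: "nat \<Rightarrow> real^'d \<Rightarrow> real"
  assumes M: "prob_space M"
    and G: "centered_gaussian_process M z"
    and St: "stationary_process M z"
    and zc: "\<forall>\<omega>\<in>space M. continuous_on UNIV (\<lambda>t. z t \<omega>)"
    and \<psi>c: "\<And>j. j\<in>{1..m} \<Longrightarrow> continuous_on UNIV (\<psi> j)"
    and supp: "\<forall>j\<in>{1..m}. \<forall>t. t \<notin> cube 0 B \<longrightarrow> \<psi> j t = 0"
  shows "(LINT \<omega>|M. Sfun \<psi> m (\<lambda>s. z s \<omega>) \<tau>) = (\<Sum>j=1..m. LINT x|(lborel \<Otimes>\<^sub>M lborel).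
            \<psi> j (fst x) * \<psi> j (snd x) * (LINT \<omega>|M. z (fst x) \<omega> * z (snd x) \<omega>))"
proof -
  have zm: "z t \<in> borel_measurable M" for t using gauss_facts(1)[OF M G] .
  have zsq: "integrable M (\<lambda>\<omega>. (z t \<omega>)^2)" for t using gauss_facts(2)[OF M G] .
  have wc: "continuous_on UNIV (\<lambda>t. z (t + \<tau>) \<omega>)" if "\<omega> \<in> space M" for \<omega>
    by (rule continuous_on_compose2[OF zc[rule_format, OF that]]) (auto intro!: continuous_intros)
  have W: "(\<lambda>x. z (snd x + \<tau>) (fst x)) \<in> borel_measurable (M \<Otimes>\<^sub>M lborel)"
    using joint_meas[of "\<lambda>t. z (t + \<tau>)" M] zm wc by simp
  have Ej: "integrable M (\<lambda>\<omega>. (corr (\<lambda>s. z s \<omega>) (\<psi> j) \<tau>)^2) \<and>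
      (LINT \<omega>|M. (corr (\<lambda>s. z s \<omega>) (\<psi> j) \<tau>)^2) = (LINT x|(lborel \<Otimes>\<^sub>M lborel).
            \<psi> j (fst x) * \<psi> j (snd x) * (LINT \<omega>|M. z (fst x) \<omega> * z (snd x) \<omega>))"
    if j: "j \<in> {1..m}" for j
  proof -
    have \<psi>i: "integrable lborel (\<psi> j)"
      by (rule cont_supp_integrable[OF \<psi>c[OF j] cube_bounded]) (use supp j in auto)
    have pw: "integrable lborel (\<lambda>s. z (s + \<tau>) \<omega> * \<psi> j s)" if "\<omega> \<in> space M" for \<omega>
      by (rule cont_supp_integrable[OF continuous_on_mult[OF wc[OF that] \<psi>c[OF j]] cube_bounded])
        (use supp j in auto)
    have pe: "corr (\<lambda>s. z s \<omega>) (\<psi> j) \<tau> = (LINT s|lborel. z (s + \<tau>) \<omega> * \<psi> j s)"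
      if "\<omega> \<in> space M" for \<omega>
    proof -
      have cm: "(\<lambda>s. z (s + \<tau>) \<omega> * \<psi> j s) \<in> borel_measurable borel"
        by (intro borel_measurable_continuous_onI continuous_on_mult wc that \<psi>c j)
      show ?thesis
        unfolding corr_def using integral_translate[OF cm, of \<tau>] by simp
    qed
    have sq: "integrable M (\<lambda>\<omega>. (z (s + \<tau>) \<omega>)^2)" for s by (rule zsq)
    have K: "(LINT \<omega>|M. (z (s + \<tau>) \<omega>)^2) \<le> (LINT \<omega>|M. (z 0 \<omega>)^2)" for s
      using stat_sq(1)[OF St zm, of "s + \<tau>"] by simp
    note cf = cov_formula[of M "\<lambda>s \<omega>. z (s + \<tau>) \<omega>" "LINT \<omega>|M. (z 0 \<omega>)^2" "\<psi> j", OF M W sq K \<psi>i pw]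
    have "integrable M (\<lambda>\<omega>. (LINT s|lborel. z (s + \<tau>) \<omega> * \<psi> j s)^2) =
        integrable M (\<lambda>\<omega>. (corr (\<lambda>s. z s \<omega>) (\<psi> j) \<tau>)^2)"
      using pe by (intro Bochner_Integration.integrable_cong refl) auto
    with cf(1) have i: "integrable M (\<lambda>\<omega>. (corr (\<lambda>s. z s \<omega>) (\<psi> j) \<tau>)^2)" by simp
    have "(LINT \<omega>|M. (corr (\<lambda>s. z s \<omega>) (\<psi> j) \<tau>)^2) = (LINT \<omega>|M. (LINT s|lborel. z (s + \<tau>) \<omega> * \<psi> j s)^2)"
      using pe by (intro Bochner_Integration.integral_cong refl) auto
    also have "\<dots> = (LINT x|(lborel \<Otimes>\<^sub>M lborel). \<psi> j (fst x) * \<psi> j (snd x) * (LINT \<omega>|M. z (fst x + \<tau>) \<omega> * z (snd x + \<tau>) \<omega>))"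
      by (rule cf(2))
    also have "\<dots> = (LINT x|(lborel \<Otimes>\<^sub>M lborel). \<psi> j (fst x) * \<psi> j (snd x) * (LINT \<omega>|M. z (fst x) \<omega> * z (snd x) \<omega>))"
      by (intro Bochner_Integration.integral_cong refl) (simp add: stat_cov[OF St zm])
    finally show ?thesis using i by simp
  qed
  have "(LINT \<omega>|M. Sfun \<psi> m (\<lambda>s. z s \<omega>) \<tau>) = (\<Sum>j=1..m. LINT \<omega>|M. (corr (\<lambda>s. z s \<omega>) (\<psi> j) \<tau>)^2)"
    unfolding Sfun_def by (rule Bochner_Integration.integral_sum) (use Ej in blast)
  also have "\<dots> = (\<Sum>j=1..m. LINT x|(lborel \<Otimes>\<^sub>M lborel).
            \<psi> j (fst x) * \<psi> j (snd x) * (LINT \<omega>|M. z (fst x) \<omega> * z (snd x) \<omega>))"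
    by (intro sum.cong refl) (use Ej in blast)
  finally show ?thesis .
qed


theorem claimA2:
  fixes M :: "'w measure" and z :: "real^'d \<Rightarrow> 'w \<Rightarrow> real"
    and \<psi> :: "nat \<Rightarrow> real^'d \<Rightarrow> real" and m :: nat
    and \<tau> :: "nat \<Rightarrow> real^'d" and a :: "nat \<Rightarrow> nat \<Rightarrow> real" and N :: nat and B :: real
  assumes "prob_space M"
    and "centered_gaussian_process M z"
    and "stationary_process M z"
    and "\<forall>\<omega>\<in>space M. continuous_on UNIV (\<lambda>t. z t \<omega>)"
    and "\<forall>j\<in>{1..m}. smooth_fun (\<psi> j)"
    and "\<forall>j\<in>{1..m}. \<forall>t. t \<notin> cube 0 B \<longrightarrow> \<psi> j t = 0"
    and "\<forall>j\<in>{1..m}. \<forall>k\<in>{1..m}.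
           (LINT t:cube 0 B|lborel. \<psi> j t * \<psi> k t) = (if j = k then 1 else 0)"
    and "\<forall>l\<in>{1..N}. \<forall>i\<in>{1..N}. l \<noteq> i \<longrightarrow> infnorm (\<tau> l - \<tau> i) \<ge> B"
    and "(LINT \<omega>|M. Sfun \<psi> m (\<lambda>s. z s \<omega>) 0) > 0"
  shows "\<exists>\<gamma>\<ge>1. \<forall>l\<in>{1..N}.
     (let x = (\<lambda>t. \<Sum>i=1..N. \<Sum>j=1..m. a i j * \<psi> j (t - \<tau> i));
          \<sigma>2 = (LINT \<omega>|M. (z 0 \<omega>)\<^sup>2);
          SNR_y = (\<Sum>j=1..m. (a l j)\<^sup>2) / (\<sigma>2 * B ^ CARD('d));
          SNR_Sy = Sfun \<psi> m x (\<tau> l) / (LINT \<omega>|M. Sfun \<psi> m (\<lambda>s. z s \<omega>) (\<tau> l))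
      in SNR_Sy = \<gamma> * SNR_y)"
proof -
  note M = assms(1) and G = assms(2) and St = assms(3) and zc = assms(4) and sm = assms(5)
    and supp = assms(6) and orth = assms(7) and sep = assms(8) and pos = assms(9)
  interpret prob_space M by (rule M)
  let ?C = "cube (0::real^'d) B"
  define \<sigma>2 where "\<sigma>2 = (LINT \<omega>|M. (z 0 \<omega>)\<^sup>2)"
  define V where "V = \<sigma>2 * B ^ CARD('d)"
  define Q where "Q = (\<Sum>j=1..m. LINT x|(lborel \<Otimes>\<^sub>M lborel).
            \<psi> j (fst x) * \<psi> j (snd x) * (LINT \<omega>|M. z (fst x) \<omega> * z (snd x) \<omega>))"
  have \<psi>c: "continuous_on UNIV (\<psi> j)" if "j \<in> {1..m}" for j
    using sm that by (intro smooth_cont) auto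
  have EQ: "(LINT \<omega>|M. Sfun \<psi> m (\<lambda>s. z s \<omega>) t) = Q" for t
    unfolding Q_def by (rule noise_const[OF M G St zc \<psi>c supp])
  have zm: "z t \<in> borel_measurable M" for t using gauss_facts(1)[OF M G] .
  have zsq: "integrable M (\<lambda>\<omega>. (z t \<omega>)^2)" for t using gauss_facts(2)[OF M G] .
  have Esq: "(LINT \<omega>|M. (z t \<omega>)^2) = \<sigma>2" for t
    unfolding \<sigma>2_def by (rule stat_sq(1)[OF St zm])
  have \<sigma>2_nn: "0 \<le> \<sigma>2" unfolding \<sigma>2_def by (intro integral_nonneg_AE) auto
  have Qpos: "Q > 0" using pos EQ[of 0] by simp
  have m1: "1 \<le> m"
  proof (rule ccontr)
    assume "\<not> 1 \<le> m" then have "m = 0" by simp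
    then have "(LINT \<omega>|M. Sfun \<psi> m (\<lambda>s. z s \<omega>) 0) = 0" by (simp add: Sfun_def)
    then show False using pos by simp
  qed
  have Bpos: "B > 0"
  proof (rule ccontr)
    assume "\<not> B > 0"
    then have "x \<notin> ?C" for x using infnorm_pos_le[of "x - 0"] by (simp add: cube_def)
    then have "?C = {}" by blast
    moreover have "(LINT t:?C|lborel. \<psi> 1 t * \<psi> 1 t) = 1" using orth m1 by auto
    ultimately show False by (simp add: set_lebesgue_integral_def)
  qed
  have J[measurable]: "(\<lambda>x. z (snd x) (fst x)) \<in> borel_measurable (M \<Otimes>\<^sub>M lborel)"
    using joint_meas[of z M] zm zc by blast
  have int0: "integrable M (\<lambda>\<omega>. Sfun \<psi> m (\<lambda>s. z s \<omega>) 0)"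
    using pos not_integrable_integral_eq by fastforce
  have Snn: "0 \<le> Sfun \<psi> m (\<lambda>s. z s \<omega>) 0" for \<omega> unfolding Sfun_def by (intro sum_nonneg) auto
  have bes: "Sfun \<psi> m (\<lambda>s. z s \<omega>) 0 \<le> (LINT s|lborel. indicator ?C s * (z s \<omega>)^2)"
    if "\<omega> \<in> space M" for \<omega>
    unfolding Sfun_def by (rule bessel[OF zc[rule_format, OF that] \<psi>c supp orth])
  have pint: "integrable lborel (\<lambda>s. indicator ?C s * (z s \<omega>)^2)" if "\<omega> \<in> space M" for \<omega>
    by (rule cont_ind_integrable[OF _ cube_bounded cube_sets])
      (intro continuous_intros zc[rule_format, OF that])
  have "ennreal Q = (\<integral>\<^sup>+\<omega>. ennreal (Sfun \<psi> m (\<lambda>s. z s \<omega>) 0) \<partial>M)"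
    using EQ[of 0] by (subst nn_integral_eq_integral[OF int0]) (auto simp: Snn)
  also have "\<dots> \<le> (\<integral>\<^sup>+\<omega>. ennreal (LINT s|lborel. indicator ?C s * (z s \<omega>)^2) \<partial>M)"
    by (intro nn_integral_mono ennreal_leI bes)
  also have "\<dots> = (\<integral>\<^sup>+\<omega>. \<integral>\<^sup>+s. ennreal (indicator ?C s * (z s \<omega>)^2) \<partial>lborel \<partial>M)"
    by (intro nn_integral_cong nn_integral_eq_integral[symmetric] pint) auto
  also have "\<dots> = (\<integral>\<^sup>+s. \<integral>\<^sup>+\<omega>. ennreal (indicator ?C s * (z s \<omega>)^2) \<partial>M \<partial>lborel)"
  proof -
    interpret P: pair_sigma_finite M "lborel :: (real^'d) measure"
      by (rule pair_sigma_finite.intro[OF prob_space_imp_sigma_finite[OF M]]) unfold_locales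
    have "(\<lambda>x. ennreal (indicator ?C (snd x) * (z (snd x) (fst x))^2)) \<in> borel_measurable (M \<Otimes>\<^sub>M lborel)"
      by measurable
    then have "case_prod (\<lambda>\<omega> s. ennreal (indicator ?C s * (z s \<omega>)^2)) \<in> borel_measurable (M \<Otimes>\<^sub>M lborel)"
      by (simp add: case_prod_beta)
    from P.Fubini'[OF this] show ?thesis by simp
  qed
  also have "\<dots> = (\<integral>\<^sup>+s. ennreal \<sigma>2 * indicator ?C s \<partial>lborel)"
  proof (intro nn_integral_cong)
    fix s :: "real^'d"
    have "(\<integral>\<^sup>+\<omega>. ennreal (indicator ?C s * (z s \<omega>)^2) \<partial>M) = ennreal (LINT \<omega>|M. indicator ?C s * (z s \<omega>)^2)"
      using zsq by (intro nn_integral_eq_integral) auto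
    also have "\<dots> = ennreal \<sigma>2 * indicator ?C s"
      using Esq[of s] by (simp add: indicator_def)
    finally show "(\<integral>\<^sup>+\<omega>. ennreal (indicator ?C s * (z s \<omega>)^2) \<partial>M) = ennreal \<sigma>2 * indicator ?C s" .
  qed
  also have "\<dots> = ennreal \<sigma>2 * emeasure lborel ?C"
    by (rule nn_integral_cmult_indicator) (simp add: cube0_box)
  also have "\<dots> = ennreal V"
    unfolding V_def using cube_measure[OF Bpos, where 'd='d] \<sigma>2_nn Bpos by (simp add: ennreal_mult)
  finally have QV: "Q \<le> V"
    using \<sigma>2_nn Bpos by (subst (asm) ennreal_le_iff) (auto simp: V_def)
  have Vpos: "V > 0" using QV Qpos by simp
  show ?thesis
  proof (intro exI[of _ "V / Q"] conjI ballI)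
    show "1 \<le> V / Q" using QV Qpos by simp
    fix l assume l: "l \<in> {1..N}"
    have sig: "Sfun \<psi> m (\<lambda>t. \<Sum>i=1..N. \<Sum>j=1..m. a i j * \<psi> j (t - \<tau> i)) (\<tau> l) = (\<Sum>j=1..m. (a l j)^2)"
      by (rule signal[OF \<psi>c supp orth sep l])
    show "let x = (\<lambda>t. \<Sum>i=1..N. \<Sum>j=1..m. a i j * \<psi> j (t - \<tau> i));
          \<sigma>2 = (LINT \<omega>|M. (z 0 \<omega>)\<^sup>2);
          SNR_y = (\<Sum>j=1..m. (a l j)\<^sup>2) / (\<sigma>2 * B ^ CARD('d));
          SNR_Sy = Sfun \<psi> m x (\<tau> l) / (LINT \<omega>|M. Sfun \<psi> m (\<lambda>s. z s \<omega>) (\<tau> l))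
      in SNR_Sy = V / Q * SNR_y"
      unfolding Let_def sig EQ \<sigma>2_def[symmetric] V_def[symmetric]
      using Vpos Qpos by (simp add: field_simps)
  qed
qed

end
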